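(* Let $N$ be a Niemeier lattice rationally generated by roots, let $R=\bigoplus_{k\in\Omega}R_k$ be its maximal root system decomposed into irreducible components, so that $N\subset R^\vee=\bigoplus_kR_k^\vee$, and for $v\in N$ let $v_k\in R_k^\vee$ be its orthogonal projection. If $l\in N$ satisfies $l^2=4$ and $l\cdot\hbar=4$ for some $\hbar\in N$, and $l\bmod R\neq0$ in $R^\vee/R$, then for every $k\in\Omega$ the vector $l_k$ is a vector of minimal square in its class $l_k+R_k\subset R_k^\vee$.
   Context: A Niemeier lattice is a positive definite even unimodular lattice of rank $24$. A root is a vector of square $2$. The maximal root system $R\subset N$ is the sublattice generated by all roots of $N$; it decomposes uniquely into an orthogonal sum of irreducible root systems $R_k$ (of types $A_n,D_n,E_6,E_7,E_8$). *)

theory Defs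
  imports "HOL-Analysis.Analysis"
begin

type_synonym vec24 = "real ^ 24"

definition zspan :: "vec24 set \<Rightarrow> vec24 set" where
  "zspan S = {(\<Sum>s\<in>F. of_int (c s) *\<^sub>R s) | F c. finite F \<and> F \<subseteq> S}"

definition is_lattice :: "vec24 set \<Rightarrow> bool" where
  "is_lattice L \<longleftrightarrow> (\<exists>B. independent B \<and> span B = UNIV \<and> L = zspan B)"

definition dual :: "vec24 set \<Rightarrow> vec24 set" where
  "dual S = {x \<in> span S. \<forall>v\<in>S. x \<bullet> v \<in> \<int>}"

definition even_lattice :: "vec24 set \<Rightarrow> bool" where
  "even_lattice L \<longleftrightarrow> (\<forall>v\<in>L. \<exists>k::int. v \<bullet> v = 2 * of_int k)"

text \<open>Niemeier lattice: positive definite (automatic in Euclidean R^24) even unimodular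
  lattice of rank 24.\<close>
definition niemeier :: "vec24 set \<Rightarrow> bool" where
  "niemeier N \<longleftrightarrow> is_lattice N \<and> even_lattice N \<and> dual N = N"

definition roots :: "vec24 set \<Rightarrow> vec24 set" where
  "roots N = {v \<in> N. v \<bullet> v = 2}"

definition root_sublattice :: "vec24 set \<Rightarrow> vec24 set" where
  "root_sublattice N = zspan (roots N)"

definition rationally_generated_by_roots :: "vec24 set \<Rightarrow> bool" where
  "rationally_generated_by_roots N \<longleftrightarrow> span (roots N) = UNIV"

text \<open>Irreducible components: roots are connected if linked by a chain of
  non-orthogonal roots; each connectivity class C of roots generates an irreducible
  component zspan C.\<close>
definition root_linked :: "vec24 set \<Rightarrow> vec24 \<Rightarrow> vec24 \<Rightarrow> bool" where
  "root_linked N = (\<lambda>r s. r \<in> roots N \<and> s \<in> roots N \<and> r \<bullet> s \<noteq> 0)\<^sup>*\<^sup>*"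

definition root_classes :: "vec24 set \<Rightarrow> vec24 set set" where
  "root_classes N = {{s \<in> roots N. root_linked N r s} | r. r \<in> roots N}"

definition components :: "vec24 set \<Rightarrow> vec24 set set" where
  "components N = zspan ` root_classes N"

definition proj :: "vec24 set \<Rightarrow> vec24 \<Rightarrow> vec24" where
  "proj S v = (THE w. w \<in> span S \<and> (\<forall>u\<in>span S. (v - w) \<bullet> u = 0))"

definition minimal_in_class :: "vec24 \<Rightarrow> vec24 set \<Rightarrow> bool" where
  "minimal_in_class x L \<longleftrightarrow> (\<forall>r\<in>L. x \<bullet> x \<le> (x + r) \<bullet> (x + r))"

end

theory Submission
  imports Defs
begin

lemma proj_prop:
  "proj S v \<in> span S \<and> (\<forall>u\<in>span S. (v - proj S v) \<bullet> u = 0)"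
proof -
  obtain y z where y: "y \<in> span S" and z: "\<And>w. w \<in> span S \<Longrightarrow> orthogonal z w"
    and e: "v = y + z"
    using orthogonal_subspace_decomp_exists[of S v] by blast
  have "\<exists>!w. w \<in> span S \<and> (\<forall>u\<in>span S. (v - w) \<bullet> u = 0)"
  proof
    show "y \<in> span S \<and> (\<forall>u\<in>span S. (v - y) \<bullet> u = 0)"
      using y z e by (simp add: orthogonal_def)
  next
    fix w assume w: "w \<in> span S \<and> (\<forall>u\<in>span S. (v - w) \<bullet> u = 0)"
    have d: "w - y \<in> span S" using w y span_diff by blast
    have "(v - y) \<bullet> (w - y) = 0" using z[OF d] e by (simp add: orthogonal_def)
    moreover have "(v - w) \<bullet> (w - y) = 0" using w d by blast
    ultimately have "(w - y) \<bullet> (w - y) = 0"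
      by (simp add: inner_diff_left inner_diff_right inner_commute)
    thus "w = y" by simp
  qed
  from theI'[OF this] show ?thesis unfolding proj_def .
qed

lemma zspan_base: "x \<in> S \<Longrightarrow> x \<in> zspan S"
  unfolding zspan_def
  by (rule CollectI, rule exI[of _ "{x}"], rule exI[of _ "\<lambda>_. 1"]) simp

lemma zspan_zero: "0 \<in> zspan S"
  unfolding zspan_def
  by (rule CollectI, rule exI[of _ "{}"], rule exI[of _ "\<lambda>_. 1"]) simp

lemma zspan_add:
  assumes "x \<in> zspan S" "y \<in> zspan S" shows "x + y \<in> zspan S"
proof -
  obtain F c where F: "finite F" "F \<subseteq> S" "x = (\<Sum>s\<in>F. of_int (c s) *\<^sub>R s)"
    using assms(1) unfolding zspan_def by blast
  obtain G d where G: "finite G" "G \<subseteq> S" "y = (\<Sum>s\<in>G. of_int (d s) *\<^sub>R s)"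
    using assms(2) unfolding zspan_def by blast
  define e where "e s = (if s \<in> F then c s else 0) + (if s \<in> G then d s else 0)" for s
  have "x = (\<Sum>s\<in>F\<union>G. of_int (if s \<in> F then c s else 0) *\<^sub>R s)"
    unfolding F(3) by (rule sum.mono_neutral_cong_left) (use F G in auto)
  moreover have "y = (\<Sum>s\<in>F\<union>G. of_int (if s \<in> G then d s else 0) *\<^sub>R s)"
    unfolding G(3) by (rule sum.mono_neutral_cong_left) (use F G in auto)
  ultimately have "x + y = (\<Sum>s\<in>F\<union>G. of_int (e s) *\<^sub>R s)"
    by (simp add: e_def sum.distrib[symmetric] scaleR_add_left)
  thus ?thesis unfolding zspan_def using F G by (intro CollectI exI[of _ "F \<union> G"] exI[of _ e]) auto
qed

lemma zspan_smult:
  assumes "x \<in> zspan S" shows "of_int a *\<^sub>R x \<in> zspan S"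
proof -
  obtain F c where F: "finite F" "F \<subseteq> S" "x = (\<Sum>s\<in>F. of_int (c s) *\<^sub>R s)"
    using assms(1) unfolding zspan_def by blast
  have "of_int a *\<^sub>R x = (\<Sum>s\<in>F. of_int (a * c s) *\<^sub>R s)"
    unfolding F(3) by (simp add: scaleR_sum_right)
  thus ?thesis unfolding zspan_def using F by (intro CollectI exI[of _ F] exI[of _ "\<lambda>s. a * c s"]) auto
qed

lemma zspan_diff:
  assumes "x \<in> zspan S" "y \<in> zspan S" shows "x - y \<in> zspan S"
proof -
  have "of_int (-1) *\<^sub>R y \<in> zspan S" by (rule zspan_smult[OF assms(2)])
  from zspan_add[OF assms(1) this] show ?thesis by simp
qed

lemma zspan_sum_closed:
  assumes "finite F" "F \<subseteq> zspan T"
  shows "(\<Sum>s\<in>F. of_int (c s) *\<^sub>R s) \<in> zspan T"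
  using assms
proof (induction F rule: finite_induct)
  case empty then show ?case by (simp add: zspan_zero)
next
  case (insert x F)
  then show ?case by (simp add: zspan_add zspan_smult)
qed

lemma zspan_subset:
  assumes "S \<subseteq> zspan T" shows "zspan S \<subseteq> zspan T"
proof
  fix x assume "x \<in> zspan S"
  then obtain F c where F: "finite F" "F \<subseteq> S" "x = (\<Sum>s\<in>F. of_int (c s) *\<^sub>R s)"
    unfolding zspan_def by blast
  show "x \<in> zspan T" unfolding F(3) using F assms by (intro zspan_sum_closed) auto
qed

theorem lemma4p1:
  fixes N :: "vec24 set" and l :: vec24
  assumes "niemeier N"
    and "rationally_generated_by_roots N"
    and "l \<in> N"
    and "l \<bullet> l = 4"
    and "\<exists>h\<in>N. l \<bullet> h = 4"
    and "l \<notin> root_sublattice N"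
  shows "\<forall>Rk\<in>components N. minimal_in_class (proj Rk l) Rk"
proof
  fix Rk assume "Rk \<in> components N"
  then obtain C where C: "C \<in> root_classes N" "Rk = zspan C"
    unfolding components_def by blast
  have Croots: "C \<subseteq> roots N" using C(1) unfolding root_classes_def by blast
  obtain B where B: "N = zspan B" using assms(1) unfolding niemeier_def is_lattice_def by blast
  have rootsN: "roots N \<subseteq> N" unfolding roots_def by blast
  have RN: "root_sublattice N \<subseteq> N"
    unfolding root_sublattice_def B by (rule zspan_subset) (use rootsN B in auto)
  have RkR: "Rk \<subseteq> root_sublattice N"
    unfolding C(2) root_sublattice_def
    by (rule zspan_subset) (use Croots zspan_base in blast)
  have ev: "\<And>v. v \<in> N \<Longrightarrow> \<exists>k::int. v \<bullet> v = 2 * of_int k"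
    using assms(1) unfolding niemeier_def even_lattice_def by blast
  show "minimal_in_class (proj Rk l) Rk"
    unfolding minimal_in_class_def
  proof (rule ballI, rule ccontr)
    fix r assume r: "r \<in> Rk"
    assume neg: "\<not> proj Rk l \<bullet> proj Rk l \<le> (proj Rk l + r) \<bullet> (proj Rk l + r)"
    let ?p = "proj Rk l"
    have rs: "r \<in> span Rk" using r span_base by blast
    have orth: "(l - ?p) \<bullet> r = 0" using proj_prop[of Rk l] rs by blast
    have lr: "l \<bullet> r = ?p \<bullet> r" using orth by (simp add: inner_diff_left)
    have "(l + r) \<bullet> (l + r) - l \<bullet> l = (?p + r) \<bullet> (?p + r) - ?p \<bullet> ?p"
      using lr by (simp add: inner_add_left inner_add_right inner_commute)
    with neg assms(4) have lt: "(l + r) \<bullet> (l + r) < 4" by linarith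
    have rR: "r \<in> root_sublattice N" using r RkR by blast
    have lrN: "l + r \<in> N"
    proof -
      have "r \<in> zspan B" using rR RN B by blast
      moreover have "l \<in> zspan B" using assms(3) B by blast
      ultimately show ?thesis using zspan_add B by blast
    qed
    have notR: "l + r \<notin> root_sublattice N"
    proof
      assume "l + r \<in> root_sublattice N"
      from zspan_diff[OF this[unfolded root_sublattice_def] rR[unfolded root_sublattice_def]]
      have "l \<in> root_sublattice N" by (simp add: root_sublattice_def)
      with assms(6) show False by blast
    qed
    obtain k :: int where k: "(l + r) \<bullet> (l + r) = 2 * of_int k" using ev[OF lrN] by blast
    have "0 \<le> (l + r) \<bullet> (l + r)" by simp
    with k lt have "k = 0 \<or> k = 1" by linarith
    then show False
    proof
      assume "k = 0"
      then have "l + r = 0" using k by simp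
      then show False using notR zspan_zero unfolding root_sublattice_def by metis
    next
      assume "k = 1"
      then have "l + r \<in> roots N" using k lrN unfolding roots_def by simp
      then show False using notR zspan_base unfolding root_sublattice_def by blast
    qed
  qed
qed

end
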